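(* Let $G$ be a graph and let $S$ be a dual general position set of $G$. Then the central vertex of any induced subgraph of $G$ isomorphic to $K_{1,3}$ does not belong to $S$.
   Context: For $S\subseteq V(G)$, two vertices $u,v$ are $S$-positionable if every shortest $u,v$-path $P$ satisfies $V(P)\cap S\subseteq\{u,v\}$. $S$ is a general position set if every two vertices of $S$ are $S$-positionable, and $S$ is a dual general position set if it is a general position set and every two vertices $u,v\in V(G)\setminus S$ are $S$-positionable. *)

theory Defs
  imports Main
begin

definition simple_graph :: "'a set \<Rightarrow> ('a \<Rightarrow> 'a \<Rightarrow> bool) \<Rightarrow> bool" where
  "simple_graph V E \<longleftrightarrow> finite V \<and> (\<forall>u v. E u v \<longrightarrow> u \<in> V \<and> v \<in> V)
     \<and> (\<forall>u v. E u v \<longrightarrow> E v u) \<and> (\<forall>v. \<not> E v v)"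

definition is_path :: "'a set \<Rightarrow> ('a \<Rightarrow> 'a \<Rightarrow> bool) \<Rightarrow> 'a list \<Rightarrow> 'a \<Rightarrow> 'a \<Rightarrow> bool" where
  "is_path V E P u v \<longleftrightarrow> P \<noteq> [] \<and> hd P = u \<and> last P = v \<and> distinct P \<and> set P \<subseteq> V
     \<and> (\<forall>i. i + 1 < length P \<longrightarrow> E (P ! i) (P ! (i + 1)))"

definition shortest_path :: "'a set \<Rightarrow> ('a \<Rightarrow> 'a \<Rightarrow> bool) \<Rightarrow> 'a list \<Rightarrow> 'a \<Rightarrow> 'a \<Rightarrow> bool" where
  "shortest_path V E P u v \<longleftrightarrow> is_path V E P u v
     \<and> (\<forall>Q. is_path V E Q u v \<longrightarrow> length P \<le> length Q)"

definition S_positionable :: "'a set \<Rightarrow> ('a \<Rightarrow> 'a \<Rightarrow> bool) \<Rightarrow> 'a set \<Rightarrow> 'a \<Rightarrow> 'a \<Rightarrow> bool" where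
  "S_positionable V E S u v \<longleftrightarrow>
     (\<forall>P. shortest_path V E P u v \<longrightarrow> set P \<inter> S \<subseteq> {u, v})"

definition general_position_set :: "'a set \<Rightarrow> ('a \<Rightarrow> 'a \<Rightarrow> bool) \<Rightarrow> 'a set \<Rightarrow> bool" where
  "general_position_set V E S \<longleftrightarrow> S \<subseteq> V \<and>
     (\<forall>u\<in>S. \<forall>v\<in>S. u \<noteq> v \<longrightarrow> S_positionable V E S u v)"

definition dual_general_position_set :: "'a set \<Rightarrow> ('a \<Rightarrow> 'a \<Rightarrow> bool) \<Rightarrow> 'a set \<Rightarrow> bool" where
  "dual_general_position_set V E S \<longleftrightarrow> general_position_set V E S \<and>
     (\<forall>u\<in>V - S. \<forall>v\<in>V - S. u \<noteq> v \<longrightarrow> S_positionable V E S u v)"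

definition induced_claw :: "'a set \<Rightarrow> ('a \<Rightarrow> 'a \<Rightarrow> bool) \<Rightarrow> 'a \<Rightarrow> 'a \<Rightarrow> 'a \<Rightarrow> 'a \<Rightarrow> bool" where
  "induced_claw V E x a b c \<longleftrightarrow> x \<in> V \<and> a \<in> V \<and> b \<in> V \<and> c \<in> V
     \<and> distinct [x, a, b, c]
     \<and> E x a \<and> E x b \<and> E x c \<and> \<not> E a b \<and> \<not> E a c \<and> \<not> E b c"

end

theory Submission
  imports Defs
begin
lemma path_len3:
  assumes "is_path V E Q u v" "u \<noteq> v" "\<not> E u v"
  shows "3 \<le> length Q"
proof (rule ccontr)
  assume "\<not> 3 \<le> length Q"
  moreover have "length Q \<noteq> 0" using assms(1) unfolding is_path_def by auto
  ultimately have "length Q = 1 \<or> length Q = 2" by arith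
  thus False
  proof
    assume "length Q = 1"
    then obtain q where "Q = [q]" by (cases Q) auto
    thus False using assms unfolding is_path_def by auto
  next
    assume "length Q = 2"
    then obtain q r where Q: "Q = [q, r]"
      by (metis One_nat_def Suc_1 length_0_conv length_Suc_conv)
    have "E (Q!0) (Q!1)" using assms(1) Q unfolding is_path_def by auto
    thus False using assms Q unfolding is_path_def by auto
  qed
qed

lemma sp3:
  assumes "u \<in> V" "v \<in> V" "x \<in> V" "distinct [u,x,v]" "E u x" "E x v" "\<not> E u v"
  shows "shortest_path V E [u,x,v] u v"
proof -
  have "\<forall>i. i + 1 < length [u,x,v] \<longrightarrow> E ([u,x,v] ! i) ([u,x,v] ! (i + 1))"
  proof (intro allI impI)
    fix i assume "i + 1 < length [u,x,v]"
    hence "i = 0 \<or> i = 1" by auto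
    thus "E ([u,x,v] ! i) ([u,x,v] ! (i + 1))" using assms by auto
  qed
  hence "is_path V E [u,x,v] u v"
    unfolding is_path_def using assms by simp
  moreover have "\<forall>Q. is_path V E Q u v \<longrightarrow> length [u,x,v] \<le> length Q"
  proof (intro allI impI)
    fix Q assume "is_path V E Q u v"
    from path_len3[OF this] assms show "length [u,x,v] \<le> length Q" by simp
  qed
  ultimately show ?thesis unfolding shortest_path_def by blast
qed

theorem mainTheorem8:
  fixes V :: "'a set" and E :: "'a \<Rightarrow> 'a \<Rightarrow> bool" and S :: "'a set"
  assumes "simple_graph V E"
    and "dual_general_position_set V E S"
    and "induced_claw V E x a b c"
  shows "x \<notin> S"
proof
  assume xS: "x \<in> S"
  have sym: "\<And>p q. E p q \<Longrightarrow> E q p" using assms(1) unfolding simple_graph_def by blast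
  have cl: "x \<in> V" "a \<in> V" "b \<in> V" "c \<in> V" "distinct [x, a, b, c]"
     "E x a" "E x b" "E x c" "\<not> E a b" "\<not> E a c" "\<not> E b c"
    using assms(3) unfolding induced_claw_def by simp_all
  have key: "False" if u: "u \<in> {a,b,c}" and v: "v \<in> {a,b,c}" and uv: "u \<noteq> v"
      and same: "(u \<in> S \<longleftrightarrow> v \<in> S)" for u v
  proof -
    have nE: "\<not> E u v" using u v uv cl(9-11) sym by auto
    have ds: "distinct [u,x,v]" using u v uv cl(5) by auto
    have ux: "E u x" using u cl(6-8) sym by auto
    have xv: "E x v" using v cl(6-8) by auto
    have uV: "u \<in> V" and vV: "v \<in> V" using u v cl(2-4) by auto
    have sp: "shortest_path V E [u,x,v] u v" using sp3[OF uV vV cl(1) ds ux xv nE] .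
    have "S_positionable V E S u v"
    proof (cases "u \<in> S")
      case True
      thus ?thesis using assms(2) same uv
        unfolding dual_general_position_set_def general_position_set_def by simp
    next
      case False
      thus ?thesis using assms(2) same uv uV vV
        unfolding dual_general_position_set_def by simp
    qed
    hence "set [u,x,v] \<inter> S \<subseteq> {u,v}" using sp unfolding S_positionable_def by blast
    thus False using xS ds by auto
  qed
  have d: "a \<noteq> b" "a \<noteq> c" "b \<noteq> c" using cl(5) by auto
  show False
  proof (cases "a \<in> S \<longleftrightarrow> b \<in> S")
    case True thus False using key[of a b] d by simp
  next
    case False
    show False
    proof (cases "a \<in> S \<longleftrightarrow> c \<in> S")
      case True thus False using key[of a c] d by simp
    next
      case False2: False
      thus False using key[of b c] d False by simp
    qed
  qed
qed

end
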